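(* Let $\mathbf X$ be a random variable with values in $\mathcal X$, let $\mathcal A$ be a finite set, and let $Q_0,Q_1:\mathcal X\times\mathcal A\to(0,\infty)$ be Q-functions with $\mathbb E\big[\sum_{a\in\mathcal A}Q_0(\mathbf X,a)\big]<\infty$. For $\gamma\notin\{0,-1\}$ define $$H_\gamma(Q_0,Q_1)=-\frac1\gamma\,\mathbb E\Bigg[\frac{\sum_{a\in\mathcal A}Q_0(\mathbf X,a)\,Q_1(\mathbf X,a)^{\gamma}}{\big\{\sum_{a\in\mathcal A}Q_1(\mathbf X,a)^{1+\gamma}\big\}^{\frac{\gamma}{1+\gamma}}}\Bigg],\qquad D_\gamma(Q_0,Q_1)=H_\gamma(Q_0,Q_1)-H_\gamma(Q_0,Q_0).$$ For $j=0,1$ let $\mathcal D_j(\mathbf x)=\operatorname{argmax}_{a\in\mathcal A}Q_j(\mathbf x,a)$ (the maximizer being assumed unique for each $\mathbf x$), and define the value function generated by $Q_0$ as $\mathbb V_0(\mathcal D)=\mathbb E[Q_0(\mathbf X,\mathcal D(\mathbf X))]$ for policy functions $\mathcal D:\mathcal X\to\mathcal A$. Then $$\lim_{\gamma\to\infty}\gamma\,D_\gamma(Q_0,Q_1)=\mathbb V_0(\mathcal D_0)-\mathbb V_0(\mathcal D_1).$$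
   Context: A Q-function is a measurable function $\mathcal X\times\mathcal A\to(0,\infty)$; a policy function is a measurable map $\mathcal X\to\mathcal A$. $\mathbb E$ denotes expectation with respect to $\mathbf X$. *)

theory Defs
  imports "HOL-Probability.Probability"
begin

definition H_gamma :: "'w measure \<Rightarrow> ('w \<Rightarrow> 'x) \<Rightarrow> 'a set \<Rightarrow> real
    \<Rightarrow> ('x \<Rightarrow> 'a \<Rightarrow> real) \<Rightarrow> ('x \<Rightarrow> 'a \<Rightarrow> real) \<Rightarrow> real" where
  "H_gamma M X A \<gamma> Q0 Q1 =
     - (1 / \<gamma>) * (\<integral>\<omega>. (\<Sum>a\<in>A. Q0 (X \<omega>) a * Q1 (X \<omega>) a powr \<gamma>)
         / (\<Sum>a\<in>A. Q1 (X \<omega>) a powr (1 + \<gamma>)) powr (\<gamma> / (1 + \<gamma>)) \<partial>M)"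

definition D_gamma :: "'w measure \<Rightarrow> ('w \<Rightarrow> 'x) \<Rightarrow> 'a set \<Rightarrow> real
    \<Rightarrow> ('x \<Rightarrow> 'a \<Rightarrow> real) \<Rightarrow> ('x \<Rightarrow> 'a \<Rightarrow> real) \<Rightarrow> real" where
  "D_gamma M X A \<gamma> Q0 Q1 = H_gamma M X A \<gamma> Q0 Q1 - H_gamma M X A \<gamma> Q0 Q0"

definition argmax_set :: "'a set \<Rightarrow> ('x \<Rightarrow> 'a \<Rightarrow> real) \<Rightarrow> 'x \<Rightarrow> 'a set" where
  "argmax_set A Q x = {a \<in> A. \<forall>b\<in>A. Q x b \<le> Q x a}"

text \<open>The policy induced by Q (meaningful when the maximizer is unique).\<close>
definition argmax_policy :: "'a set \<Rightarrow> ('x \<Rightarrow> 'a \<Rightarrow> real) \<Rightarrow> 'x \<Rightarrow> 'a" where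
  "argmax_policy A Q x = (THE a. a \<in> argmax_set A Q x)"

definition value_fun :: "'w measure \<Rightarrow> ('w \<Rightarrow> 'x) \<Rightarrow> ('x \<Rightarrow> 'a \<Rightarrow> real) \<Rightarrow> ('x \<Rightarrow> 'a) \<Rightarrow> real" where
  "value_fun M X Q0 D = (\<integral>\<omega>. Q0 (X \<omega>) (D (X \<omega>)) \<partial>M)"

end

theory Submission imports Defs "HOL-Real_Asymp.Real_Asymp" begin

lemma powr_lim0: "0<q \<Longrightarrow> q<(1::real) \<Longrightarrow> ((\<lambda>x. q powr x) \<longlongrightarrow> 0) at_top" by real_asymp

lemma ptwise:
  fixes A :: "'a set" and Q c :: "'a \<Rightarrow> real"
  assumes fin: "finite A" and pos: "\<forall>a\<in>A. Q a > 0" and m: "m \<in> A"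
    and strict: "\<forall>b\<in>A. b \<noteq> m \<longrightarrow> Q b < Q m"
  shows "((\<lambda>\<gamma>. (\<Sum>a\<in>A. c a * Q a powr \<gamma>) / (\<Sum>a\<in>A. Q a powr (1+\<gamma>)) powr (\<gamma>/(1+\<gamma>))) \<longlongrightarrow> c m) at_top"
proof -
  define Mx where "Mx = Q m"
  have Mx: "Mx > 0" using pos m Mx_def by auto
  define \<epsilon> where "\<epsilon> \<gamma> = (\<Sum>b\<in>A-{m}. (Q b / Mx) powr (1+\<gamma>))" for \<gamma>
  have eps0: "\<epsilon> \<gamma> \<ge> 0" for \<gamma> unfolding \<epsilon>_def by (intro sum_nonneg) auto
  have q0: "((\<lambda>\<gamma>. (Q b / Mx) powr \<gamma>) \<longlongrightarrow> 0) at_top" if "b \<in> A - {m}" for b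
  proof -
    have "0 < Q b / Mx" "Q b / Mx < 1" using that pos strict Mx Mx_def by auto
    then show ?thesis by (rule powr_lim0)
  qed
  have "(\<epsilon> \<longlongrightarrow> 0) at_top"
  proof -
    have "((\<lambda>\<gamma>. \<Sum>b\<in>A-{m}. (Q b / Mx) powr (1+\<gamma>)) \<longlongrightarrow> (\<Sum>b\<in>A-{m}. 0)) at_top"
    proof (rule tendsto_sum)
      fix b assume b: "b \<in> A - {m}"
      have "filterlim (\<lambda>\<gamma>::real. 1 + \<gamma>) at_top at_top" by real_asymp
      from filterlim_compose[OF q0[OF b] this] show "((\<lambda>\<gamma>. (Q b / Mx) powr (1+\<gamma>)) \<longlongrightarrow> 0) at_top" .
    qed
    then show ?thesis unfolding \<epsilon>_def by simp
  qed
  then have "((\<lambda>\<gamma>. 1 + \<epsilon> \<gamma>) \<longlongrightarrow> 1 + 0) at_top" by (intro tendsto_add) auto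
  moreover have "((\<lambda>\<gamma>::real. \<gamma>/(1+\<gamma>)) \<longlongrightarrow> 1) at_top" by real_asymp
  ultimately have den: "((\<lambda>\<gamma>. (1 + \<epsilon> \<gamma>) powr (\<gamma>/(1+\<gamma>))) \<longlongrightarrow> 1 powr 1) at_top"
    by (intro tendsto_powr) auto
  have num: "((\<lambda>\<gamma>. (Q a / Mx) powr \<gamma>) \<longlongrightarrow> (if a = m then 1 else 0)) at_top" if "a \<in> A" for a
  proof (cases "a = m")
    case True
    then show ?thesis using Mx Mx_def by simp
  next
    case False
    then show ?thesis using q0[of a] that by simp
  qed
  have lim: "((\<lambda>\<gamma>. \<Sum>a\<in>A. c a * ((Q a / Mx) powr \<gamma> / (1 + \<epsilon> \<gamma>) powr (\<gamma>/(1+\<gamma>))))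
      \<longlongrightarrow> (\<Sum>a\<in>A. c a * ((if a = m then 1 else 0) / 1 powr 1))) at_top"
    by (intro tendsto_sum tendsto_mult tendsto_const tendsto_divide num den) auto
  have "(\<Sum>a\<in>A. c a * ((if a = m then 1 else 0) / 1 powr 1)) = c m"
    using fin m by (simp add: if_distrib[of "\<lambda>x. c _ * x"] cong: if_cong)
  with lim have lim': "((\<lambda>\<gamma>. \<Sum>a\<in>A. c a * ((Q a / Mx) powr \<gamma> / (1 + \<epsilon> \<gamma>) powr (\<gamma>/(1+\<gamma>))))
      \<longlongrightarrow> c m) at_top" by simp
  show ?thesis
  proof (rule tendsto_cong[THEN iffD1, OF _ lim'])
    show "\<forall>\<^sub>F \<gamma> in at_top. (\<Sum>a\<in>A. c a * ((Q a / Mx) powr \<gamma> / (1 + \<epsilon> \<gamma>) powr (\<gamma>/(1+\<gamma>)))) =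
       (\<Sum>a\<in>A. c a * Q a powr \<gamma>) / (\<Sum>a\<in>A. Q a powr (1+\<gamma>)) powr (\<gamma>/(1+\<gamma>))"
      using eventually_gt_at_top[of 0]
    proof eventually_elim
      case (elim \<gamma>)
      have S: "(\<Sum>a\<in>A. Q a powr (1+\<gamma>)) = Mx powr (1+\<gamma>) * (1 + \<epsilon> \<gamma>)"
      proof -
        have "(\<Sum>a\<in>A. Q a powr (1+\<gamma>)) = Q m powr (1+\<gamma>) + (\<Sum>a\<in>A-{m}. Q a powr (1+\<gamma>))"
          using fin m by (simp add: sum.remove)
        also have "(\<Sum>a\<in>A-{m}. Q a powr (1+\<gamma>)) = (\<Sum>a\<in>A-{m}. Mx powr (1+\<gamma>) * (Q a / Mx) powr (1+\<gamma>))"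
          using pos Mx by (intro sum.cong) (auto simp: powr_divide)
        finally show ?thesis unfolding \<epsilon>_def Mx_def by (simp add: sum_distrib_left algebra_simps)
      qed
      have D: "(\<Sum>a\<in>A. Q a powr (1+\<gamma>)) powr (\<gamma>/(1+\<gamma>)) = Mx powr \<gamma> * (1 + \<epsilon> \<gamma>) powr (\<gamma>/(1+\<gamma>))"
        unfolding S using Mx eps0[of \<gamma>] elim
        by (simp add: powr_mult powr_powr)
      have "(\<Sum>a\<in>A. c a * Q a powr \<gamma>) / (\<Sum>a\<in>A. Q a powr (1+\<gamma>)) powr (\<gamma>/(1+\<gamma>))
          = (\<Sum>a\<in>A. c a * Q a powr \<gamma> / (Mx powr \<gamma> * (1 + \<epsilon> \<gamma>) powr (\<gamma>/(1+\<gamma>))))"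
        unfolding D by (simp add: sum_divide_distrib)
      also have "\<dots> = (\<Sum>a\<in>A. c a * ((Q a / Mx) powr \<gamma> / (1 + \<epsilon> \<gamma>) powr (\<gamma>/(1+\<gamma>))))"
        using pos Mx by (intro sum.cong) (auto simp: powr_divide)
      finally show ?case by simp
    qed
  qed
qed

lemma bound:
  fixes A :: "'a set" and Q c :: "'a \<Rightarrow> real"
  assumes fin: "finite A" and pos: "\<forall>a\<in>A. Q a > 0" and c: "\<forall>a\<in>A. c a \<ge> 0" and g: "\<gamma> \<ge> 0"
  shows "norm ((\<Sum>a\<in>A. c a * Q a powr \<gamma>) / (\<Sum>a\<in>A. Q a powr (1+\<gamma>)) powr (\<gamma>/(1+\<gamma>))) \<le> (\<Sum>a\<in>A. c a)"
proof -
  define D where "D = (\<Sum>a\<in>A. Q a powr (1+\<gamma>)) powr (\<gamma>/(1+\<gamma>))"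
  have le: "Q a powr \<gamma> \<le> D" if a: "a \<in> A" for a
  proof -
    have "Q a powr (1+\<gamma>) \<le> (\<Sum>a\<in>A. Q a powr (1+\<gamma>))"
      using a fin by (intro member_le_sum) auto
    then have "(Q a powr (1+\<gamma>)) powr (\<gamma>/(1+\<gamma>)) \<le> D"
      unfolding D_def using g by (intro powr_mono2) auto
    moreover have "(Q a powr (1+\<gamma>)) powr (\<gamma>/(1+\<gamma>)) = Q a powr \<gamma>"
      using g pos a by (simp add: powr_powr)
    ultimately show ?thesis by simp
  qed
  show ?thesis
  proof (cases "A = {}")
    case True then show ?thesis by simp
  next
    case False
    then obtain a0 where "a0 \<in> A" by auto
    then have Dpos: "D > 0" using le[of a0] pos by (smt (verit) powr_gt_zero)
    have "(\<Sum>a\<in>A. c a * Q a powr \<gamma>) / D = (\<Sum>a\<in>A. c a * (Q a powr \<gamma> / D))"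
      by (simp add: sum_divide_distrib)
    also have "\<dots> \<le> (\<Sum>a\<in>A. c a)"
    proof (intro sum_mono)
      fix a assume a: "a \<in> A"
      have "Q a powr \<gamma> / D \<le> 1" using le[OF a] Dpos by simp
      from mult_left_mono[OF this, of "c a"] c a show "c a * (Q a powr \<gamma> / D) \<le> c a" by simp
    qed
    finally have "(\<Sum>a\<in>A. c a * Q a powr \<gamma>) / D \<le> (\<Sum>a\<in>A. c a)" .
    moreover have "(\<Sum>a\<in>A. c a * Q a powr \<gamma>) / D \<ge> 0"
      using c Dpos by (intro divide_nonneg_pos sum_nonneg) auto
    ultimately show ?thesis unfolding D_def[symmetric] by simp
  qed
qed

lemma argmax_props:
  assumes "\<exists>!a. a \<in> argmax_set A Q x"
  shows "argmax_policy A Q x \<in> A" "\<forall>b\<in>A. b \<noteq> argmax_policy A Q x \<longrightarrow> Q x b < Q x (argmax_policy A Q x)"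
proof -
  have m: "argmax_policy A Q x \<in> argmax_set A Q x"
    unfolding argmax_policy_def using theI'[OF assms] .
  then show "argmax_policy A Q x \<in> A" by (simp add: argmax_set_def)
  show "\<forall>b\<in>A. b \<noteq> argmax_policy A Q x \<longrightarrow> Q x b < Q x (argmax_policy A Q x)"
  proof (intro ballI impI)
    fix b assume b: "b \<in> A" "b \<noteq> argmax_policy A Q x"
    have le: "Q x b \<le> Q x (argmax_policy A Q x)" using m b by (simp add: argmax_set_def)
    show "Q x b < Q x (argmax_policy A Q x)"
    proof (rule ccontr)
      assume "\<not> ?thesis"
      with le have eq: "Q x b = Q x (argmax_policy A Q x)" by simp
      have "b \<in> argmax_set A Q x" using m b eq by (simp add: argmax_set_def)
      with m assms b(2) show False by blast
    qed
  qed
qed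

lemma meas_comp:
  assumes "X \<in> measurable M S" "(\<lambda>(x, a). Q x a) \<in> borel_measurable (S \<Otimes>\<^sub>M count_space A)" "a \<in> A"
  shows "(\<lambda>\<omega>. Q (X \<omega>) a) \<in> borel_measurable M"
proof -
  have "(\<lambda>\<omega>. (X \<omega>, a)) \<in> measurable M (S \<Otimes>\<^sub>M count_space A)"
    using assms by (intro measurable_Pair) auto
  from measurable_compose[OF this assms(2)] show ?thesis by simp
qed

lemma intlim:
  fixes M :: "'w measure" and S :: "'x measure" and X :: "'w \<Rightarrow> 'x"
    and A :: "'a set" and Q0 Q1 :: "'x \<Rightarrow> 'a \<Rightarrow> real"
  assumes "prob_space M"
    and X: "X \<in> measurable M S"
    and fin: "finite A"
    and m0: "(\<lambda>(x, a). Q0 x a) \<in> borel_measurable (S \<Otimes>\<^sub>M count_space A)"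
    and m1: "(\<lambda>(x, a). Q1 x a) \<in> borel_measurable (S \<Otimes>\<^sub>M count_space A)"
    and p0: "\<forall>x\<in>space S. \<forall>a\<in>A. Q0 x a > 0"
    and p1: "\<forall>x\<in>space S. \<forall>a\<in>A. Q1 x a > 0"
    and int: "integrable M (\<lambda>\<omega>. \<Sum>a\<in>A. Q0 (X \<omega>) a)"
    and u1: "\<forall>x\<in>space S. \<exists>!a. a \<in> argmax_set A Q1 x"
  shows "((\<lambda>\<gamma>. \<integral>\<omega>. (\<Sum>a\<in>A. Q0 (X \<omega>) a * Q1 (X \<omega>) a powr \<gamma>)
         / (\<Sum>a\<in>A. Q1 (X \<omega>) a powr (1 + \<gamma>)) powr (\<gamma> / (1 + \<gamma>)) \<partial>M)
     \<longlongrightarrow> value_fun M X Q0 (argmax_policy A Q1)) at_top"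
proof -
  define s where "s \<gamma> \<omega> = (\<Sum>a\<in>A. Q0 (X \<omega>) a * Q1 (X \<omega>) a powr \<gamma>)
         / (\<Sum>a\<in>A. Q1 (X \<omega>) a powr (1 + \<gamma>)) powr (\<gamma> / (1 + \<gamma>))" for \<gamma> \<omega>
  define f where "f \<omega> = Q0 (X \<omega>) (argmax_policy A Q1 (X \<omega>))" for \<omega>
  have XS: "X \<omega> \<in> space S" if "\<omega> \<in> space M" for \<omega> using X that by (auto simp: measurable_def)
  have pt: "((\<lambda>\<gamma>. s \<gamma> \<omega>) \<longlongrightarrow> f \<omega>) at_top" if "\<omega> \<in> space M" for \<omega>
    unfolding s_def f_def
    using ptwise[OF fin _ argmax_props[OF u1[rule_format, OF XS[OF that]]]] p1 XS[OF that] by blast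
  have [measurable]: "(\<lambda>\<omega>. Q0 (X \<omega>) a) \<in> borel_measurable M" if "a \<in> A" for a
    using meas_comp[OF X m0 that] .
  have [measurable]: "(\<lambda>\<omega>. Q1 (X \<omega>) a) \<in> borel_measurable M" if "a \<in> A" for a
    using meas_comp[OF X m1 that] .
  have ms: "s \<gamma> \<in> borel_measurable M" for \<gamma>
    unfolding s_def by measurable
  have mf: "f \<in> borel_measurable M"
  proof (rule borel_measurable_LIMSEQ_real[where u="\<lambda>n. s (real n)"])
    fix \<omega> assume "\<omega> \<in> space M"
    from filterlim_compose[OF pt[OF this] filterlim_real_sequentially]
    show "(\<lambda>n. s (real n) \<omega>) \<longlonglongrightarrow> f \<omega>" .
  qed (rule ms)
  have "((\<lambda>t. integral\<^sup>L M (s t)) \<longlongrightarrow> integral\<^sup>L M f) at_top"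
  proof (rule integral_dominated_convergence_at_top[OF mf ms int])
    show "AE x in M. ((\<lambda>i. s i x) \<longlongrightarrow> f x) at_top" using pt by auto
    show "\<forall>\<^sub>F i in at_top. AE x in M. norm (s i x) \<le> (\<Sum>a\<in>A. Q0 (X x) a)"
      using eventually_ge_at_top[of 0]
    proof eventually_elim
      case (elim \<gamma>)
      show ?case
      proof (rule AE_I2)
        fix \<omega> assume "\<omega> \<in> space M"
        then show "norm (s \<gamma> \<omega>) \<le> (\<Sum>a\<in>A. Q0 (X \<omega>) a)"
          unfolding s_def using bound[OF fin _ _ elim, of "Q1 (X \<omega>)" "Q0 (X \<omega>)"] p0 p1 XS
          by (simp add: less_imp_le)
      qed
    qed
  qed
  then show ?thesis unfolding s_def f_def value_fun_def by simp
qed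

theorem theorem2:
  fixes M :: "'w measure" and S :: "'x measure" and X :: "'w \<Rightarrow> 'x"
    and A :: "'a set" and Q0 Q1 :: "'x \<Rightarrow> 'a \<Rightarrow> real"
  assumes "prob_space M"
    and "X \<in> measurable M S"
    and "finite A"
    and "(\<lambda>(x, a). Q0 x a) \<in> borel_measurable (S \<Otimes>\<^sub>M count_space A)"
    and "(\<lambda>(x, a). Q1 x a) \<in> borel_measurable (S \<Otimes>\<^sub>M count_space A)"
    and "\<forall>x\<in>space S. \<forall>a\<in>A. Q0 x a > 0"
    and "\<forall>x\<in>space S. \<forall>a\<in>A. Q1 x a > 0"
    and "integrable M (\<lambda>\<omega>. \<Sum>a\<in>A. Q0 (X \<omega>) a)"
    and "\<forall>x\<in>space S. \<exists>!a. a \<in> argmax_set A Q0 x"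
    and "\<forall>x\<in>space S. \<exists>!a. a \<in> argmax_set A Q1 x"
  shows "((\<lambda>\<gamma>. \<gamma> * D_gamma M X A \<gamma> Q0 Q1) \<longlongrightarrow>
           value_fun M X Q0 (argmax_policy A Q0) - value_fun M X Q0 (argmax_policy A Q1)) at_top"
proof -
  note L1 = intlim[OF assms(1-8) assms(10)]
  note L0 = intlim[OF assms(1-4) assms(4) assms(6) assms(6) assms(8) assms(9)]
  show ?thesis
    apply (rule Lim_transform_eventually[OF tendsto_diff[OF L0 L1]])
    using eventually_gt_at_top[of "0::real"]
    by eventually_elim (simp add: D_gamma_def H_gamma_def algebra_simps)
qed

end
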